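(* Let $A$ be a vector space with bilinear operations $\star,\circ$; $x\cdot y=x\star y+y\star x$, $[x,y]=x\circ y-y\circ x$. (1) If $(A,\cdot,[-,-])$ is a transposed Poisson algebra, $(A,\star)$ is Zinbiel, $(A,\circ)$ is pre-Lie, and $(-\mathcal{L}^*_{\star},\mathcal{L}^*_{\circ},A^* )$ is a representation of $(A,\cdot,[-,-])$, then $(A,\star,\circ)$ is a TZPD algebra. (2) Conversely, if $(A,\star,\circ)$ is a TZPD algebra then $(A,\cdot,[-,-])$ is a transposed Poisson algebra with representation $(-\mathcal{L}^*_{\star},\mathcal{L}^*_{\circ},A^* )$.
   Context: Finite-dimensional spaces, characteristic zero. $\mathcal{L}_\ast(x)y=x\ast y$; for linear $\rho:A\to\mathrm{End}(V)$, $\langle\rho^*(x)v^*,u\rangle=-\langle v^*,\rho(x)u\rangle$. Zinbiel: $x\star(y\star z)=(x\star y)\star z+(y\star x)\star z$. Pre-Lie: $(x\circ y)\circ z-x\circ(y\circ z)=(y\circ x)\circ z-y\circ(x\circ z)$. Transposed Poisson algebra: $(A,\cdot)$ commutative associative, $(A,[-,-])$ Lie, $2z\cdot[x,y]=[z\cdot x,y]+[x,z\cdot y]$. A representation of a transposed Poisson algebra is $(\mu,\rho,V)$ with $\mu(x\cdot y)=\mu(x)\mu(y)$, $\rho([x,y])=[\rho(x),\rho(y)]$, $2\mu(x)\rho(y)=\rho(x\cdot y)+\rho(y)\mu(x)$, $2\mu([x,y])=\rho(x)\mu(y)-\rho(y)\mu(x)$. A TZPD algebra is $(A,\star,\circ)$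 with $(A,\star)$ Zinbiel, $(A,\circ)$ pre-Lie, and for all $x,y,z$: $2y\circ(x\star z)=(x\star y+y\star x)\circ z+x\star(y\circ z)$; $2(x\circ y-y\circ x)\star z=x\star(y\circ z)-y\star(x\circ z)$; $y\circ(x\star z+z\star x)-x\circ(y\star z+z\star y)+z\star(x\circ y-y\circ x)=0$. *)

theory Defs
  imports Main "HOL.Vector_Spaces" "HOL-Library.Function_Algebras"
begin

definition bilinear_op :: "('k::field \<Rightarrow> 'v::ab_group_add \<Rightarrow> 'v) \<Rightarrow> ('v \<Rightarrow> 'v \<Rightarrow> 'v) \<Rightarrow> bool" where
  "bilinear_op sc m \<longleftrightarrow>
     (\<forall>y. Vector_Spaces.linear sc sc (\<lambda>x. m x y)) \<and> (\<forall>x. Vector_Spaces.linear sc sc (m x))"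

definition zinbiel :: "('v::ab_group_add \<Rightarrow> 'v \<Rightarrow> 'v) \<Rightarrow> bool" where
  "zinbiel st \<longleftrightarrow> (\<forall>x y z. st x (st y z) = st (st x y) z + st (st y x) z)"

definition pre_lie :: "('v::ab_group_add \<Rightarrow> 'v \<Rightarrow> 'v) \<Rightarrow> bool" where
  "pre_lie ci \<longleftrightarrow> (\<forall>x y z. ci (ci x y) z - ci x (ci y z) = ci (ci y x) z - ci y (ci x z))"

definition transposed_poisson :: "('k::field \<Rightarrow> 'v::ab_group_add \<Rightarrow> 'v) \<Rightarrow> ('v \<Rightarrow> 'v \<Rightarrow> 'v) \<Rightarrow> ('v \<Rightarrow> 'v \<Rightarrow> 'v) \<Rightarrow> bool" where
  "transposed_poisson sc mul br \<longleftrightarrow>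
     bilinear_op sc mul \<and> bilinear_op sc br \<and>
     (\<forall>x y. mul x y = mul y x) \<and>
     (\<forall>x y z. mul (mul x y) z = mul x (mul y z)) \<and>
     (\<forall>x. br x x = 0) \<and>
     (\<forall>x y z. br x (br y z) + br y (br z x) + br z (br x y) = 0) \<and>
     (\<forall>x y z. mul z (br x y) + mul z (br x y) = br (mul z x) y + br x (mul z y))"

definition tp_rep :: "('k::field \<Rightarrow> 'v::ab_group_add \<Rightarrow> 'v) \<Rightarrow> ('v \<Rightarrow> 'v \<Rightarrow> 'v) \<Rightarrow> ('v \<Rightarrow> 'v \<Rightarrow> 'v)
     \<Rightarrow> ('k \<Rightarrow> 'w::ab_group_add \<Rightarrow> 'w) \<Rightarrow> 'w set \<Rightarrow> ('v \<Rightarrow> 'w \<Rightarrow> 'w) \<Rightarrow> ('v \<Rightarrow> 'w \<Rightarrow> 'w) \<Rightarrow> bool" where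
  "tp_rep sc mul br scV V mu rho \<longleftrightarrow>
     (\<forall>x. \<forall>v\<in>V. mu x v \<in> V \<and> rho x v \<in> V) \<and>
     (\<forall>x. \<forall>v\<in>V. \<forall>w\<in>V. \<forall>a b.
         mu x (scV a v + scV b w) = scV a (mu x v) + scV b (mu x w) \<and>
         rho x (scV a v + scV b w) = scV a (rho x v) + scV b (rho x w)) \<and>
     (\<forall>x y. \<forall>v\<in>V. \<forall>a b.
         mu (sc a x + sc b y) v = scV a (mu x v) + scV b (mu y v) \<and>
         rho (sc a x + sc b y) v = scV a (rho x v) + scV b (rho y v)) \<and>
     (\<forall>x y. \<forall>v\<in>V. mu (mul x y) v = mu x (mu y v)) \<and>
     (\<forall>x y. \<forall>v\<in>V. rho (br x y) v = rho x (rho y v) - rho y (rho x v)) \<and>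
     (\<forall>x y. \<forall>v\<in>V. mu x (rho y v) + mu x (rho y v) = rho (mul x y) v + rho y (mu x v)) \<and>
     (\<forall>x y. \<forall>v\<in>V. mu (br x y) v + mu (br x y) v = rho x (mu y v) - rho y (mu x v))"

definition dual_space :: "('k::field \<Rightarrow> 'v::ab_group_add \<Rightarrow> 'v) \<Rightarrow> ('v \<Rightarrow> 'k) set" where
  "dual_space sc = {f. Vector_Spaces.linear sc (*) f}"

definition dual_scale :: "'k::field \<Rightarrow> ('v \<Rightarrow> 'k) \<Rightarrow> ('v \<Rightarrow> 'k)" where
  "dual_scale c f = (\<lambda>u. c * f u)"

definition dual_op :: "('v \<Rightarrow> 'v \<Rightarrow> 'v) \<Rightarrow> 'v \<Rightarrow> ('v \<Rightarrow> 'k::field) \<Rightarrow> ('v \<Rightarrow> 'k)" where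
  "dual_op rho x f = (\<lambda>u. - f (rho x u))"

definition tzpd :: "('v::ab_group_add \<Rightarrow> 'v \<Rightarrow> 'v) \<Rightarrow> ('v \<Rightarrow> 'v \<Rightarrow> 'v) \<Rightarrow> bool" where
  "tzpd st ci \<longleftrightarrow> zinbiel st \<and> pre_lie ci \<and>
     (\<forall>x y z. ci y (st x z) + ci y (st x z) = ci (st x y + st y x) z + st x (ci y z)) \<and>
     (\<forall>x y z. st (ci x y - ci y x) z + st (ci x y - ci y x) z = st x (ci y z) - st y (ci x z)) \<and>
     (\<forall>x y z. ci y (st x z + st z x) - ci x (st y z + st z y) + st z (ci x y - ci y x) = 0)"

end

theory Submission
  imports Defs
begin

lemma additive_rules:
  fixes f :: "'a::ab_group_add \<Rightarrow> 'b::ab_group_add"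
  assumes "\<And>a b. f (a + b) = f a + f b"
  shows "f 0 = 0" "f (- a) = - f a" "f (a - b) = f a - f b"
proof -
  have "f (0 + 0) = f 0 + f 0" by (rule assms)
  then show z: "f 0 = 0" by (simp only: add_0_left add_cancel_right_right)
  have n: "f (- c) = - f c" for c
  proof -
    have "f (c + - c) = f c + f (- c)" by (rule assms)
    then show ?thesis using z by (simp add: eq_neg_iff_add_eq_0 add.commute)
  qed
  then show "f (- a) = - f a" .
  have "f (a + - b) = f a + f (- b)" by (rule assms)
  then show "f (a - b) = f a - f b" using n[of b] by simp
qed

lemma separate:
  fixes sc :: "'k::field \<Rightarrow> 'v::ab_group_add \<Rightarrow> 'v"
  assumes vs: "vector_space sc" and v: "v \<noteq> 0"
  shows "\<exists>f. f \<in> dual_space sc \<and> f v = 1"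
proof -
  have vk: "vector_space ((*)::'k\<Rightarrow>'k\<Rightarrow>'k)" by unfold_locales (auto simp: algebra_simps)
  interpret p: vector_space_pair sc "(*)::'k\<Rightarrow>'k\<Rightarrow>'k" using vs vk by (simp add: vector_space_pair_def)
  have ind: "p.vs1.independent {v}"
    using p.vs1.independent_insertI[of v "{}"] v by (simp add: p.vs1.span_empty)
  show ?thesis
    by (intro exI[of _ "p.construct {v} (\<lambda>_. 1)"]) (simp add: dual_space_def p.linear_construct[OF ind] p.construct_basis[OF ind])
qed

lemma separate0:
  fixes sc :: "'k::field \<Rightarrow> 'v::ab_group_add \<Rightarrow> 'v"
  assumes vs: "vector_space sc" and h: "\<And>f. f \<in> dual_space sc \<Longrightarrow> f v = 0"
  shows "v = 0"
  using separate[OF vs] h by force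


lemma vk: "vector_space ((*)::'k::field\<Rightarrow>'k\<Rightarrow>'k)" by unfold_locales (auto simp: algebra_simps)

locale bil2 =
  fixes sc :: "'k::field_char_0 \<Rightarrow> 'v::ab_group_add \<Rightarrow> 'v" and st ci :: "'v \<Rightarrow> 'v \<Rightarrow> 'v"
  assumes vs: "vector_space sc" and bst: "bilinear_op sc st" and bci: "bilinear_op sc ci"
begin

lemma st_addL[simp]: "st (a+b) c = st a c + st b c" using bst unfolding bilinear_op_def linear_iff by auto
lemma st_addR[simp]: "st c (a+b) = st c a + st c b" using bst unfolding bilinear_op_def linear_iff by auto
lemma ci_addL[simp]: "ci (a+b) c = ci a c + ci b c" using bci unfolding bilinear_op_def linear_iff by auto
lemma ci_addR[simp]: "ci c (a+b) = ci c a + ci c b" using bci unfolding bilinear_op_def linear_iff by auto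
lemma st_scL[simp]: "st (sc r a) c = sc r (st a c)" using bst unfolding bilinear_op_def linear_iff by auto
lemma st_scR[simp]: "st c (sc r a) = sc r (st c a)" using bst unfolding bilinear_op_def linear_iff by auto
lemma ci_scL[simp]: "ci (sc r a) c = sc r (ci a c)" using bci unfolding bilinear_op_def linear_iff by auto
lemma ci_scR[simp]: "ci c (sc r a) = sc r (ci c a)" using bci unfolding bilinear_op_def linear_iff by auto

lemma st_diffL[simp]: "st (a-b) c = st a c - st b c" by (rule additive_rules(3)[where f="\<lambda>a. st a c"]) simp
lemma st_diffR[simp]: "st c (a-b) = st c a - st c b" by (rule additive_rules(3)[where f="st c"]) simp
lemma ci_diffL[simp]: "ci (a-b) c = ci a c - ci b c" by (rule additive_rules(3)[where f="\<lambda>a. ci a c"]) simp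
lemma ci_diffR[simp]: "ci c (a-b) = ci c a - ci c b" by (rule additive_rules(3)[where f="ci c"]) simp
lemma st_negL[simp]: "st (-a) c = - st a c" by (rule additive_rules(2)[where f="\<lambda>a. st a c"]) simp
lemma st_negR[simp]: "st c (-a) = - st c a" by (rule additive_rules(2)[where f="st c"]) simp
lemma ci_negL[simp]: "ci (-a) c = - ci a c" by (rule additive_rules(2)[where f="\<lambda>a. ci a c"]) simp
lemma ci_negR[simp]: "ci c (-a) = - ci c a" by (rule additive_rules(2)[where f="ci c"]) simp

lemma lf:
  assumes "f \<in> dual_space sc"
  shows "f (a + b) = f a + f b" "f (a - b) = f a - f b" "f (- a) = - f a" "f (sc r a) = r * f a"
proof -
  have l: "\<And>a b. f (a + b) = f a + f b" "\<And>r a. f (sc r a) = r * f a"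
    using assms unfolding dual_space_def linear_iff by auto
  show "f (a + b) = f a + f b" "f (sc r a) = r * f a" by (rule l)+
  show "f (a - b) = f a - f b" "f (- a) = - f a" by (rule additive_rules; rule l)+
qed

lemma lf0: assumes "f \<in> dual_space sc" shows "f 0 = 0"
proof -
  have l: "\<And>a b. f (a + b) = f a + f b"
    using assms unfolding dual_space_def linear_iff by auto
  show ?thesis by (rule additive_rules(1)) (rule l)
qed

lemma dual_comp:
  assumes v: "v \<in> dual_space sc" and g: "\<And>a c. g (a + c) = g a + g c" "\<And>r a. g (sc r a) = sc r (g a)"
  shows "(\<lambda>u. v (g u)) \<in> dual_space sc" "(\<lambda>u. - v (g u)) \<in> dual_space sc"
  unfolding dual_space_def mem_Collect_eq linear_iff
  by (simp_all add: vs vk g lf[OF v] algebra_simps)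

definition "Z a b c = st a (st b c) - (st (st a b) c + st (st b a) c)"
definition "P a b c = (ci (ci a b) c - ci a (ci b c)) - (ci (ci b a) c - ci b (ci a c))"
definition "T1 a b c = ci b (st a c) + ci b (st a c) - (ci (st a b + st b a) c + st a (ci b c))"
definition "T2 a b c = st (ci a b - ci b a) c + st (ci a b - ci b a) c - (st a (ci b c) - st b (ci a c))"
definition "T3 a b c = ci b (st a c + st c a) - ci a (st b c + st c b) + st c (ci a b - ci b a)"
definition "TP a b c = (st c (ci a b - ci b a) + st (ci a b - ci b a) c) + (st c (ci a b - ci b a) + st (ci a b - ci b a) c)
   - ((ci (st c a + st a c) b - ci b (st c a + st a c)) + (ci a (st c b + st b c) - ci (st c b + st b c) a))"

lemma c_assoc: "(st (st x y + st y x) z + st z (st x y + st y x)) - (st x (st y z + st z y) + st (st y z + st z y) x)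
   = - Z x y z - Z x z y + Z z x y + Z z y x"
  by (simp add: Z_def algebra_simps)

lemma c_jac: "(ci x (ci y z - ci z y) - ci (ci y z - ci z y) x) + (ci y (ci z x - ci x z) - ci (ci z x - ci x z) y)
   + (ci z (ci x y - ci y x) - ci (ci x y - ci y x) z) = - P x y z + P x z y - P y z x"
  by (simp add: P_def algebra_simps)

lemma c_TP: "TP x y z = - T1 x y z + T1 y x z + T1 z x y - T1 z y x + T2 x y z + (T3 x y z + T3 x y z + T3 x y z)"
  by (simp add: TP_def T1_def T2_def T3_def algebra_simps)

lemma c_T3: "T3 x y z + T3 x y z + T3 x y z = T1 x y z - T1 y x z - T1 z x y + T1 z y x - T2 x y z + TP x y z"
  by (simp add: TP_def T1_def T2_def T3_def algebra_simps)

end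


lemma three:
  fixes sc :: "'k::field_char_0 \<Rightarrow> 'v::ab_group_add \<Rightarrow> 'v"
    and w :: 'v
  assumes vs: "vector_space sc" and h: "w + w + w = 0" shows "w = 0"
proof -
  have m: "module sc" using vs by (simp add: module_iff_vector_space)
  have "sc (1/3) (w + w + w) = sc (1/3 + 1/3 + 1/3) w"
    by (simp only: module.scale_left_distrib[OF m] module.scale_right_distrib[OF m])
  also have "(1/3::'k)+1/3+1/3 = 1" by simp
  then have "sc (1/3 + 1/3 + 1/3) w = w" by (simp add: module.scale_one[OF m])
  finally show ?thesis using h by (simp add: module.scale_zero_right[OF m])
qed

theorem mainTheorem18:
  fixes sc :: "'k::field_char_0 \<Rightarrow> 'v::ab_group_add \<Rightarrow> 'v"
    and st ci :: "'v \<Rightarrow> 'v \<Rightarrow> 'v"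
  assumes "vector_space sc"
    and "\<exists>B. finite_dimensional_vector_space sc B"
    and "bilinear_op sc st" and "bilinear_op sc ci"
  shows "((transposed_poisson sc (\<lambda>x y. st x y + st y x) (\<lambda>x y. ci x y - ci y x)
           \<and> zinbiel st \<and> pre_lie ci
           \<and> tp_rep sc (\<lambda>x y. st x y + st y x) (\<lambda>x y. ci x y - ci y x)
                dual_scale (dual_space sc) (\<lambda>x f. - dual_op st x f) (dual_op ci)
         \<longrightarrow> tzpd st ci)
     \<and> (tzpd st ci
         \<longrightarrow> transposed_poisson sc (\<lambda>x y. st x y + st y x) (\<lambda>x y. ci x y - ci y x)
           \<and> tp_rep sc (\<lambda>x y. st x y + st y x) (\<lambda>x y. ci x y - ci y x)
                dual_scale (dual_space sc) (\<lambda>x f. - dual_op st x f) (dual_op ci)))"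
proof -
  note vs = assms(1)
  have m: "module sc" using vs by (simp add: module_iff_vector_space)
  interpret b: bil2 sc st ci using assms by (simp add: bil2_def)
  have zin: "zinbiel st \<longleftrightarrow> (\<forall>a c d. b.Z a c d = 0)"
    by (simp add: zinbiel_def b.Z_def)
  have pl: "pre_lie ci \<longleftrightarrow> (\<forall>a c d. b.P a c d = 0)"
    by (simp add: pre_lie_def b.P_def)
  have tz: "tzpd st ci \<longleftrightarrow> zinbiel st \<and> pre_lie ci \<and> (\<forall>a c d. b.T1 a c d = 0)
     \<and> (\<forall>a c d. b.T2 a c d = 0) \<and> (\<forall>a c d. b.T3 a c d = 0)"
    by (simp add: tzpd_def b.T1_def b.T2_def b.T3_def)
  have tpiff: "(\<forall>x y z. (\<lambda>x y. st x y + st y x) z ((\<lambda>x y. ci x y - ci y x) x y) + (\<lambda>x y. st x y + st y x) z ((\<lambda>x y. ci x y - ci y x) x y) =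
      (\<lambda>x y. ci x y - ci y x) ((\<lambda>x y. st x y + st y x) z x) y + (\<lambda>x y. ci x y - ci y x) x ((\<lambda>x y. st x y + st y x) z y))
     \<longleftrightarrow> (\<forall>a c d. b.TP a c d = 0)"
    by (simp add: b.TP_def)
  show ?thesis
  proof (intro conjI impI)
    assume H: "transposed_poisson sc (\<lambda>x y. st x y + st y x) (\<lambda>x y. ci x y - ci y x)
           \<and> zinbiel st \<and> pre_lie ci
           \<and> tp_rep sc (\<lambda>x y. st x y + st y x) (\<lambda>x y. ci x y - ci y x)
                dual_scale (dual_space sc) (\<lambda>x f. - dual_op st x f) (dual_op ci)"
    then have TP0: "\<And>a c d. b.TP a c d = 0" using tpiff unfolding transposed_poisson_def by blast
    have R6: "\<And>x y v. v \<in> dual_space sc \<Longrightarrow> (- dual_op st x (dual_op ci y v)) + (- dual_op st x (dual_op ci y v))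
        = dual_op ci (st x y + st y x) v + dual_op ci y (- dual_op st x v)"
      using H unfolding tp_rep_def by blast
    have R7: "\<And>x y v. v \<in> dual_space sc \<Longrightarrow> (- dual_op st (ci x y - ci y x) v) + (- dual_op st (ci x y - ci y x) v)
        = dual_op ci x (- dual_op st y v) - dual_op ci y (- dual_op st x v)"
      using H unfolding tp_rep_def by blast
    have T1: "b.T1 x y u = 0" for x y u
    proof (rule separate0[OF vs])
      fix f assume f: "f \<in> dual_space sc"
      have "(- dual_op st x (dual_op ci y f)) u + (- dual_op st x (dual_op ci y f)) u
        = dual_op ci (st x y + st y x) f u + dual_op ci y (- dual_op st x f) u"
        using fun_cong[OF R6[where v=f and x=x and y=y, OF f], of u] by (simp only: plus_fun_apply minus_apply uminus_apply)
      then show "f (b.T1 x y u) = 0"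
        by (simp add: dual_op_def b.T1_def b.lf[OF f] algebra_simps)
    qed
    have T2: "b.T2 x y u = 0" for x y u
    proof (rule separate0[OF vs])
      fix f assume f: "f \<in> dual_space sc"
      have "(- dual_op st (ci x y - ci y x) f) u + (- dual_op st (ci x y - ci y x) f) u
        = dual_op ci x (- dual_op st y f) u - dual_op ci y (- dual_op st x f) u"
        using fun_cong[OF R7[where v=f and x=x and y=y, OF f], of u] by (simp only: plus_fun_apply minus_apply uminus_apply)
      then show "f (b.T2 x y u) = 0"
        by (simp add: dual_op_def b.T2_def b.lf[OF f] algebra_simps)
    qed
    have T3: "b.T3 x y u = 0" for x y u
      using three[OF vs, of "b.T3 x y u"] b.c_T3[of x y u] by (simp add: T1 T2 TP0)
    show "tzpd st ci" using H T1 T2 T3 tz by blast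
  next
    assume H: "tzpd st ci"
    then have Z0: "\<And>a c d. b.Z a c d = 0" and P0: "\<And>a c d. b.P a c d = 0"
      and T10: "\<And>a c d. b.T1 a c d = 0" and T20: "\<And>a c d. b.T2 a c d = 0" and T30: "\<And>a c d. b.T3 a c d = 0"
      using tz zin pl by blast+
    show "transposed_poisson sc (\<lambda>x y. st x y + st y x) (\<lambda>x y. ci x y - ci y x)"
      unfolding transposed_poisson_def
    proof (intro conjI)
      show "bilinear_op sc (\<lambda>x y. st x y + st y x)" "bilinear_op sc (\<lambda>x y. ci x y - ci y x)"
        unfolding bilinear_op_def linear_iff
        by (auto simp: vs module.scale_right_distrib[OF m] module.scale_right_diff_distrib[OF m] algebra_simps)
      show "\<forall>x y. st x y + st y x = st y x + st x y" by (simp add: add.commute)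
      show "\<forall>x y z. st (st x y + st y x) z + st z (st x y + st y x) = st x (st y z + st z y) + st (st y z + st z y) x"
        using b.c_assoc Z0 by simp
      show "\<forall>x. ci x x - ci x x = 0" by simp
      show "\<forall>x y z. ci x (ci y z - ci z y) - ci (ci y z - ci z y) x + (ci y (ci z x - ci x z) - ci (ci z x - ci x z) y) + (ci z (ci x y - ci y x) - ci (ci x y - ci y x) z) = 0"
        using b.c_jac P0 by simp
      show "\<forall>x y z. (\<lambda>x y. st x y + st y x) z ((\<lambda>x y. ci x y - ci y x) x y) + (\<lambda>x y. st x y + st y x) z ((\<lambda>x y. ci x y - ci y x) x y) =
      (\<lambda>x y. ci x y - ci y x) ((\<lambda>x y. st x y + st y x) z x) y + (\<lambda>x y. ci x y - ci y x) x ((\<lambda>x y. st x y + st y x) z y)"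
        unfolding tpiff using b.c_TP T10 T20 T30 by simp
    qed
    show "tp_rep sc (\<lambda>x y. st x y + st y x) (\<lambda>x y. ci x y - ci y x)
                dual_scale (dual_space sc) (\<lambda>x f. - dual_op st x f) (dual_op ci)"
      unfolding tp_rep_def
      apply (intro conjI allI ballI ext)
      apply (simp_all add: dual_op_def dual_scale_def)
      subgoal for x v by (simp add: fun_Compl_def b.dual_comp)
      subgoal for x v by (simp add: b.dual_comp)
      subgoal by (simp add: b.lf)
      subgoal by (simp add: b.lf)
      subgoal for x y v u
        apply (subgoal_tac "v (b.Z y x u) = 0")
         apply (simp add: b.Z_def b.lf; algebra)
        using Z0[of y x u] b.lf0[of v] apply simp
        done
      subgoal for x y v u
        apply (subgoal_tac "v (b.P x y u) = 0")
         apply (simp add: b.P_def b.lf; algebra)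
        using P0[of x y u] b.lf0[of v] apply simp
        done
      subgoal for x y v u
        apply (subgoal_tac "v (b.T1 x y u) = 0")
         apply (simp add: b.T1_def b.lf; algebra)
        using T10[of x y u] b.lf0[of v] apply simp
        done
      subgoal for x y v u
        apply (subgoal_tac "v (b.T2 x y u) = 0")
         apply (simp add: b.T2_def b.lf; algebra)
        using T20[of x y u] b.lf0[of v] apply simp
        done
      done
  qed
qed

end
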